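(* Let $T>1$, $N>1$, and fix $K\ge N^2$. Suppose the data points $x_1,\dots,x_N\in\mathbb{R}$ and label vectors $\mathbf{y}_1,\dots,\mathbf{y}_N\in\mathbb{R}^T$ are sampled from a distribution that is absolutely continuous with respect to Lebesgue measure on $\mathbb{R}^N\times\mathbb{R}^{T\times N}$. Then with probability one, the connect-the-dots interpolant $f_{\mathcal{D}}$ of the data is the unique solution of $$\min_{\theta}\ \sum_{k=1}^K\|\mathbf{v}_k\|_2\quad\text{subject to}\quad |w_k|=1\ (k=1,\dots,K),\qquad f_\theta(x_i)=\mathbf{y}_i\ (i=1,\dots,N),$$ where $f_\theta(x)=\sum_{k=1}^K \mathbf{v}_k(w_kx+b_k)_+ + \mathbf{a}x+\mathbf{c}$ with $w_k,b_k\in\mathbb{R}$, $\mathbf{v}_k,\mathbf{a},\mathbf{c}\in\mathbb{R}^T$.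
   Context: $(z)_+=\max\{0,z\}$. A function $f:\mathbb{R}\to\mathbb{R}^T$ is a solution of the problem if $f=f_\theta$ for some optimal $\theta$; uniqueness refers to uniqueness of this function. With probability one the $x_i$ are distinct; relabel so that $x_1<\dots<x_N$. Let $\mathbf{s}_i=\frac{\mathbf{y}_{i+1}-\mathbf{y}_i}{x_{i+1}-x_i}$. The connect-the-dots interpolant $f_{\mathcal{D}}:\mathbb{R}\to\mathbb{R}^T$ is the continuous piecewise linear function which in each coordinate interpolates the data, is linear on each $[x_i,x_{i+1}]$, is linear with slope $\mathbf{s}_1$ on $(-\infty,x_2]$ and linear with slope $\mathbf{s}_{N-1}$ on $[x_{N-1},\infty)$. *)

theory Defs
  imports "HOL-Probability.Probability"
begin

text \<open>Data: points x (indexed by 'n, N = CARD('n)) and labels Y (Y $ i in R^T, T = CARD('t)).\<close>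

type_synonym ('n, 't) data = "(real^'n) \<times> (real^'t::finite^'n)"

definition relu_net ::
  "nat \<Rightarrow> (nat \<Rightarrow> real) \<Rightarrow> (nat \<Rightarrow> real) \<Rightarrow> (nat \<Rightarrow> real^'t::finite) \<Rightarrow> real^'t \<Rightarrow> real^'t
   \<Rightarrow> real \<Rightarrow> real^'t::finite" where
  "relu_net K w b v a c x = (\<Sum>k<K. max 0 (w k * x + b k) *\<^sub>R v k) + x *\<^sub>R a + c"

definition net_cost :: "nat \<Rightarrow> (nat \<Rightarrow> real^'t::finite) \<Rightarrow> real" where
  "net_cost K v = (\<Sum>k<K. norm (v k))"

definition feasible ::
  "nat \<Rightarrow> ('n::finite, 't::finite) data \<Rightarrow> (nat \<Rightarrow> real) \<Rightarrow> (nat \<Rightarrow> real) \<Rightarrow> (nat \<Rightarrow> real^'t::finite)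
   \<Rightarrow> real^'t::finite \<Rightarrow> real^'t \<Rightarrow> bool" where
  "feasible K d w b v a c \<longleftrightarrow>
     (\<forall>k<K. \<bar>w k\<bar> = 1) \<and> (\<forall>i. relu_net K w b v a c (fst d $ i) = snd d $ i)"

definition optimal ::
  "nat \<Rightarrow> ('n::finite, 't::finite) data \<Rightarrow> (nat \<Rightarrow> real) \<Rightarrow> (nat \<Rightarrow> real) \<Rightarrow> (nat \<Rightarrow> real^'t::finite)
   \<Rightarrow> real^'t::finite \<Rightarrow> real^'t \<Rightarrow> bool" where
  "optimal K d w b v a c \<longleftrightarrow> feasible K d w b v a c \<and>
     (\<forall>w' b' v' a' c'. feasible K d w' b' v' a' c' \<longrightarrow> net_cost K v \<le> net_cost K v')"

text \<open>Connect-the-dots interpolant (meaningful when the x_i are distinct and N >= 2).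
  s is the sorted list of data points; the label at point p is Y of the index i with x_i = p.\<close>
definition ctd_label :: "('n::finite, 't::finite) data \<Rightarrow> real \<Rightarrow> real^'t::finite" where
  "ctd_label d p = snd d $ (THE i. fst d $ i = p)"

definition ctd_seg :: "('n::finite, 't::finite) data \<Rightarrow> real \<Rightarrow> real \<Rightarrow> real \<Rightarrow> real^'t::finite" where
  "ctd_seg d p q t = ctd_label d p + ((t - p) / (q - p)) *\<^sub>R (ctd_label d q - ctd_label d p)"

definition ctd_interp :: "('n::finite, 't::finite) data \<Rightarrow> real \<Rightarrow> real^'t::finite" where
  "ctd_interp d t =
    (let s = sorted_list_of_set (range (\<lambda>i. fst d $ i)); n = length s;
         j = (if t < s ! 0 then 0 else (GREATEST j. j < n - 1 \<and> s ! j \<le> t))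
     in ctd_seg d (s ! j) (s ! (j + 1)) t)"

definition ctd_unique_solution :: "nat \<Rightarrow> ('n::finite, 't::finite) data \<Rightarrow> bool" where
  "ctd_unique_solution K d \<longleftrightarrow>
     (\<exists>w b v a c. optimal K d w b v a c \<and> relu_net K w b v a c = ctd_interp d) \<and>
     (\<forall>w b v a c. optimal K d w b v a c \<longrightarrow> relu_net K w b v a c = ctd_interp d)"

end

theory Submission
  imports Defs
begin


lemma graph_negligible:
  fixes S :: "((real^'n::finite) \<times> (real^'t::finite^'n)) set" and g j t
  assumes "\<And>z. z \<in> S \<Longrightarrow> snd z $ j $ t = g (fst z, (\<chi> a. \<chi> b. if a = j \<and> b = t then 0 else snd z $ a $ b))"
  and "\<And>z. z \<in> S \<Longrightarrow> g differentiable (at (fst z, (\<chi> a. \<chi> b. if a = j \<and> b = t then 0 else snd z $ a $ b)))"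
  shows "negligible S"
proof -
  define clr where "clr = (\<lambda>z::(real^'n) \<times> (real^'t^'n). (fst z, (\<chi> a. \<chi> b. if a = j \<and> b = t then 0 else snd z $ a $ b) :: real^'t^'n))"
  define e where "e = ((0::real^'n), (\<chi> a. \<chi> b. if a = j \<and> b = t then 1 else 0) :: real^'t^'n)"
  have "e \<noteq> 0"
  proof
    assume "e = 0"
    then have "snd e $ j $ t = 0" by simp
    then show False by (simp add: e_def)
  qed
  then have neg: "negligible {z. e \<bullet> z = 0}" by (intro negligible_hyperplane) auto
  have ip: "e \<bullet> clr z = 0" for z
    by (simp add: e_def clr_def inner_vec_def inner_prod_def if_distrib cong: if_cong)
  have sub: "clr ` S \<subseteq> {z. e \<bullet> z = 0}" using ip by auto
  have diff: "(\<lambda>z. z + g z *\<^sub>R e) differentiable_on clr ` S"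
    using assms(2) unfolding clr_def
    by (auto intro!: differentiable_at_imp_differentiable_on derivative_intros)
  have "negligible ((\<lambda>z. z + g z *\<^sub>R e) ` clr ` S)"
    by (rule negligible_differentiable_image_negligible[OF order_refl negligible_subset[OF neg sub] diff])
  moreover have "S \<subseteq> (\<lambda>z. z + g z *\<^sub>R e) ` clr ` S"
  proof
    fix z assume z: "z \<in> S"
    have "z = clr z + g (clr z) *\<^sub>R e"
      using assms(1)[OF z] unfolding clr_def e_def
      by (cases z) (auto simp: vec_eq_iff)
    then show "z \<in> (\<lambda>z. z + g z *\<^sub>R e) ` clr ` S" using z by blast
  qed
  ultimately show ?thesis by (rule negligible_subset)
qed

lemma AE_from_negligible:
  fixes P :: "('a::euclidean_space) measure"
  assumes "absolutely_continuous lborel P" "negligible {d. \<not> Q d}"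
  shows "AE d in P. Q d"
proof -
  have "{d. \<not> Q d} \<in> null_sets (completion lborel)"
    using assms(2) by (simp add: negligible_iff_null_sets)
  then obtain N where N: "N \<in> null_sets lborel" "{d. \<not> Q d} \<subseteq> N"
    unfolding null_sets_completion_iff2 by blast
  then have "N \<in> null_sets P" using assms(1) unfolding absolutely_continuous_def by blast
  then show ?thesis by (rule AE_I') (use N in auto)
qed



definition Dt :: "('n::finite, 't::finite) data \<Rightarrow> 'n \<Rightarrow> 'n \<Rightarrow> 'n \<Rightarrow> real^'t" where
  "Dt d j1 j2 j3 = (snd d $ j3 - snd d $ j2) /\<^sub>R (fst d $ j3 - fst d $ j2)
      - (snd d $ j2 - snd d $ j1) /\<^sub>R (fst d $ j2 - fst d $ j1)"

definition dts :: "('n::finite, 't::finite) data \<Rightarrow> 'n \<Rightarrow> 'n \<Rightarrow> 'n \<Rightarrow> 't \<Rightarrow> real" where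
  "dts d j1 j2 j3 t = (snd d $ j3 $ t - snd d $ j2 $ t) / (fst d $ j3 - fst d $ j2)
      - (snd d $ j2 $ t - snd d $ j1 $ t) / (fst d $ j2 - fst d $ j1)"

lemma Dt_nth: "Dt d j1 j2 j3 $ t = dts d j1 j2 j3 t"
  by (simp add: Dt_def dts_def divide_inverse_commute)

definition generic :: "'t \<Rightarrow> 't \<Rightarrow> ('n::finite, 't::finite) data \<Rightarrow> bool" where
  "generic t1 t2 d \<longleftrightarrow> inj (($) (fst d)) \<and>
     (\<forall>j1 j2 j3. distinct [j1, j2, j3] \<longrightarrow> Dt d j1 j2 j3 $ t1 \<noteq> 0) \<and>
     (\<forall>j1 j2 j3 j4. distinct [j1, j2, j3, j4] \<longrightarrow>
        Dt d j1 j2 j3 $ t1 * Dt d j2 j3 j4 $ t2 \<noteq> Dt d j1 j2 j3 $ t2 * Dt d j2 j3 j4 $ t1)"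

lemma diff_fst_nth[derivative_intros]: "(\<lambda>z::(real^'n::finite) \<times> 'b::real_normed_vector. fst z $ i) differentiable F"
  by (rule bounded_linear_imp_differentiable)
     (rule bounded_linear_compose[OF bounded_linear_vec_nth bounded_linear_fst])

lemma diff_snd_nth[derivative_intros]: "(\<lambda>z::'b::real_normed_vector \<times> (real^'t::finite^'n::finite). snd z $ i $ k) differentiable F"
  by (rule bounded_linear_imp_differentiable)
     (rule bounded_linear_compose[OF bounded_linear_vec_nth bounded_linear_compose[OF bounded_linear_vec_nth bounded_linear_snd]])

lemma negl_Z1:
  assumes "i \<noteq> j"
  shows "negligible {d::(real^'n::finite) \<times> (real^'t::finite^'n). fst d $ i = fst d $ j}"
proof -
  define a where "a = ((axis i 1 - axis j 1) :: real^'n, 0 :: real^'t^'n)"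
  have "a \<noteq> 0"
  proof
    assume "a = 0" then have "fst a $ i = 0" by simp
    then show False using assms by (simp add: a_def axis_def)
  qed
  then have "negligible {d. a \<bullet> d = 0}" by (intro negligible_hyperplane) auto
  moreover have "a \<bullet> d = fst d $ i - fst d $ j" for d
    by (cases d) (simp add: a_def inner_prod_def inner_diff_left inner_axis')
  ultimately show ?thesis by simp
qed

lemma negl_Z2:
  assumes "distinct [j1, j2, j3]"
  shows "negligible {d::(real^'n::finite) \<times> (real^'t::finite^'n). inj (($) (fst d)) \<and> Dt d j1 j2 j3 $ t1 = 0}"
proof (rule graph_negligible[where j = j3 and t = t1 and
     g = "\<lambda>z. snd z $ j2 $ t1 + (fst z $ j3 - fst z $ j2) * ((snd z $ j2 $ t1 - snd z $ j1 $ t1) / (fst z $ j2 - fst z $ j1))"])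
  fix z :: "(real^'n::finite) \<times> (real^'t::finite^'n)"
  assume z: "z \<in> {d. inj (($) (fst d)) \<and> Dt d j1 j2 j3 $ t1 = 0}"
  then have i: "inj (($) (fst z))" and D: "dts z j1 j2 j3 t1 = 0" by (auto simp: Dt_nth)
  have ne1: "fst z $ j2 - fst z $ j1 \<noteq> 0" and ne2: "fst z $ j3 - fst z $ j2 \<noteq> 0"
    using i assms by (auto dest: injD)
  from D have "(snd z $ j3 $ t1 - snd z $ j2 $ t1) / (fst z $ j3 - fst z $ j2) =
     (snd z $ j2 $ t1 - snd z $ j1 $ t1) / (fst z $ j2 - fst z $ j1)" by (simp add: dts_def)
  then have "snd z $ j3 $ t1 = snd z $ j2 $ t1 + (fst z $ j3 - fst z $ j2) * ((snd z $ j2 $ t1 - snd z $ j1 $ t1) / (fst z $ j2 - fst z $ j1))"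
    using ne2 by (simp add: field_simps)
  then show "snd z $ j3 $ t1 = (\<lambda>z. snd z $ j2 $ t1 + (fst z $ j3 - fst z $ j2) * ((snd z $ j2 $ t1 - snd z $ j1 $ t1) / (fst z $ j2 - fst z $ j1)))
          (fst z, \<chi> a b. if a = j3 \<and> b = t1 then 0 else snd z $ a $ b)"
    using assms by simp
  show "(\<lambda>z. snd z $ j2 $ t1 + (fst z $ j3 - fst z $ j2) * ((snd z $ j2 $ t1 - snd z $ j1 $ t1) / (fst z $ j2 - fst z $ j1)))
          differentiable at (fst z, \<chi> a b. if a = j3 \<and> b = t1 then 0 else snd z $ a $ b)"
    using ne1 by (auto intro!: derivative_intros)
qed


lemma negl_Z3:
  assumes "distinct [j1, j2, j3, j4]" "t1 \<noteq> t2"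
  shows "negligible {d::(real^'n::finite) \<times> (real^'t::finite^'n). inj (($) (fst d)) \<and> Dt d j1 j2 j3 $ t1 \<noteq> 0 \<and>
      Dt d j1 j2 j3 $ t1 * Dt d j2 j3 j4 $ t2 = Dt d j1 j2 j3 $ t2 * Dt d j2 j3 j4 $ t1}"
proof (rule graph_negligible[where j = j4 and t = t2 and
     g = "\<lambda>z. snd z $ j3 $ t2 + (fst z $ j4 - fst z $ j3) * ((snd z $ j3 $ t2 - snd z $ j2 $ t2) / (fst z $ j3 - fst z $ j2)
            + dts z j1 j2 j3 t2 * dts z j2 j3 j4 t1 / dts z j1 j2 j3 t1)"])
  fix z :: "(real^'n::finite) \<times> (real^'t::finite^'n)"
  assume z: "z \<in> {d. inj (($) (fst d)) \<and> Dt d j1 j2 j3 $ t1 \<noteq> 0 \<and>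
      Dt d j1 j2 j3 $ t1 * Dt d j2 j3 j4 $ t2 = Dt d j1 j2 j3 $ t2 * Dt d j2 j3 j4 $ t1}"
  then have i: "inj (($) (fst z))" and D1: "dts z j1 j2 j3 t1 \<noteq> 0"
    and D: "dts z j1 j2 j3 t1 * dts z j2 j3 j4 t2 = dts z j1 j2 j3 t2 * dts z j2 j3 j4 t1"
    by (auto simp: Dt_nth)
  have ne1: "fst z $ j2 - fst z $ j1 \<noteq> 0" and ne2: "fst z $ j3 - fst z $ j2 \<noteq> 0"
    and ne3: "fst z $ j4 - fst z $ j3 \<noteq> 0"
    using i assms by (auto dest: injD)
  have E: "dts z j2 j3 j4 t2 = dts z j1 j2 j3 t2 * dts z j2 j3 j4 t1 / dts z j1 j2 j3 t1"
    using D D1 by (simp add: field_simps)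
  have E2: "dts z j2 j3 j4 t2 = (snd z $ j4 $ t2 - snd z $ j3 $ t2) / (fst z $ j4 - fst z $ j3)
     - (snd z $ j3 $ t2 - snd z $ j2 $ t2) / (fst z $ j3 - fst z $ j2)" by (simp add: dts_def)
  have "snd z $ j4 $ t2 = snd z $ j3 $ t2 + (fst z $ j4 - fst z $ j3) * ((snd z $ j3 $ t2 - snd z $ j2 $ t2) / (fst z $ j3 - fst z $ j2)
            + dts z j1 j2 j3 t2 * dts z j2 j3 j4 t1 / dts z j1 j2 j3 t1)"
  proof -
    have "(snd z $ j4 $ t2 - snd z $ j3 $ t2) / (fst z $ j4 - fst z $ j3) =
       (snd z $ j3 $ t2 - snd z $ j2 $ t2) / (fst z $ j3 - fst z $ j2)
            + dts z j1 j2 j3 t2 * dts z j2 j3 j4 t1 / dts z j1 j2 j3 t1"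
      using E E2 by simp
    then show ?thesis using ne3 by (simp add: field_simps)
  qed
  moreover have "dts (fst z, \<chi> a b. if a = j4 \<and> b = t2 then 0 else snd z $ a $ b) j1 j2 j3 t = dts z j1 j2 j3 t" for t
    using assms by (simp add: dts_def)
  moreover have "dts (fst z, \<chi> a b. if a = j4 \<and> b = t2 then 0 else snd z $ a $ b) j2 j3 j4 t1 = dts z j2 j3 j4 t1"
    using assms by (simp add: dts_def)
  ultimately show "snd z $ j4 $ t2 = (\<lambda>z. snd z $ j3 $ t2 + (fst z $ j4 - fst z $ j3) * ((snd z $ j3 $ t2 - snd z $ j2 $ t2) / (fst z $ j3 - fst z $ j2)
            + dts z j1 j2 j3 t2 * dts z j2 j3 j4 t1 / dts z j1 j2 j3 t1))
          (fst z, \<chi> a b. if a = j4 \<and> b = t2 then 0 else snd z $ a $ b)"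
    using assms by simp
  have D1': "dts (fst z, \<chi> a b. if a = j4 \<and> b = t2 then 0 else snd z $ a $ b) j1 j2 j3 t1 \<noteq> 0"
    using assms D1 by (simp add: dts_def)
  show "(\<lambda>z. snd z $ j3 $ t2 + (fst z $ j4 - fst z $ j3) * ((snd z $ j3 $ t2 - snd z $ j2 $ t2) / (fst z $ j3 - fst z $ j2)
            + dts z j1 j2 j3 t2 * dts z j2 j3 j4 t1 / dts z j1 j2 j3 t1))
          differentiable at (fst z, \<chi> a b. if a = j4 \<and> b = t2 then 0 else snd z $ a $ b)"
    using ne1 ne2 ne3 D1' unfolding dts_def by (auto intro!: derivative_intros)
qed

lemma negl_bad:
  assumes "t1 \<noteq> t2"
  shows "negligible {d::(real^'n::finite) \<times> (real^'t::finite^'n). \<not> generic t1 t2 d}"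
proof -
  define F1 where "F1 = (\<lambda>(i::'n, j). {d::(real^'n::finite) \<times> (real^'t::finite^'n). i \<noteq> j \<and> fst d $ i = fst d $ j})"
  define F2 where "F2 = (\<lambda>(j1::'n, j2, j3). {d::(real^'n::finite) \<times> (real^'t::finite^'n). distinct [j1, j2, j3] \<and>
      inj (($) (fst d)) \<and> Dt d j1 j2 j3 $ t1 = 0})"
  define F3 where "F3 = (\<lambda>(j1::'n, j2, j3, j4). {d::(real^'n::finite) \<times> (real^'t::finite^'n). distinct [j1, j2, j3, j4] \<and>
      inj (($) (fst d)) \<and> Dt d j1 j2 j3 $ t1 \<noteq> 0 \<and>
      Dt d j1 j2 j3 $ t1 * Dt d j2 j3 j4 $ t2 = Dt d j1 j2 j3 $ t2 * Dt d j2 j3 j4 $ t1})"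
  have n1: "negligible (F1 p)" for p
  proof (cases p)
    case (Pair i j)
    show ?thesis
    proof (cases "i = j")
      case False
      then show ?thesis using negl_Z1[OF False, where 't='t] unfolding F1_def Pair
        by (auto intro: negligible_subset)
    next
      case True
      then have "F1 p = {}" by (auto simp: F1_def Pair)
      then show ?thesis by simp
    qed
  qed
  have n2: "negligible (F2 p)" for p
  proof (cases p)
    case (fields j1 j2 j3)
    show ?thesis
    proof (cases "distinct [j1, j2, j3]")
      case True
      then show ?thesis using negl_Z2[OF True, of t1] unfolding F2_def fields
        by (auto intro: negligible_subset)
    next
      case False
      then have "F2 p = {}" by (auto simp: F2_def fields)
      then show ?thesis by simp
    qed
  qed
  have n3: "negligible (F3 p)" for p
  proof (cases p)
    case (fields j1 j2 j3 j4)
    show ?thesis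
    proof (cases "distinct [j1, j2, j3, j4]")
      case True
      then show ?thesis using negl_Z3[OF True assms] unfolding F3_def fields
        by (auto intro: negligible_subset)
    next
      case False
      then have "F3 p = {}" by (auto simp: F3_def fields)
      then show ?thesis by simp
    qed
  qed
  have "negligible (\<Union>(range F1) \<union> \<Union>(range F2) \<union> \<Union>(range F3))"
    using n1 n2 n3 by (intro negligible_Un negligible_Union) auto
  moreover have "{d. \<not> generic t1 t2 d} \<subseteq> \<Union>(range F1) \<union> \<Union>(range F2) \<union> \<Union>(range F3)"
  proof
    fix d assume "d \<in> {d::(real^'n::finite) \<times> (real^'t::finite^'n). \<not> generic t1 t2 d}"
    then have ng: "\<not> generic t1 t2 d" by simp
    show "d \<in> \<Union>(range F1) \<union> \<Union>(range F2) \<union> \<Union>(range F3)"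
    proof (cases "inj (($) (fst d))")
      case False
      then obtain i j where "i \<noteq> j" "fst d $ i = fst d $ j" unfolding inj_def by blast
      then have "d \<in> F1 (i, j)" by (simp add: F1_def)
      then show ?thesis by blast
    next
      case True
      show ?thesis
      proof (cases "\<forall>j1 j2 j3. distinct [j1, j2, j3] \<longrightarrow> Dt d j1 j2 j3 $ t1 \<noteq> 0")
        case False
        then obtain j1 j2 j3 where "distinct [j1, j2, j3]" "Dt d j1 j2 j3 $ t1 = 0" by blast
        then have "d \<in> F2 (j1, j2, j3)" using True by (simp add: F2_def)
        then show ?thesis by blast
      next
        case T2: True
        then obtain j1 j2 j3 j4 where "distinct [j1, j2, j3, j4]"
          "Dt d j1 j2 j3 $ t1 * Dt d j2 j3 j4 $ t2 = Dt d j1 j2 j3 $ t2 * Dt d j2 j3 j4 $ t1"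
          using ng True unfolding generic_def by blast
        moreover then have "Dt d j1 j2 j3 $ t1 \<noteq> 0" using T2 by auto
        ultimately have "d \<in> F3 (j1, j2, j3, j4)" using True by (simp add: F3_def)
        then show ?thesis by blast
      qed
    qed
  qed
  ultimately show ?thesis by (rule negligible_subset)
qed





lemma ramp_unit:
  assumes "\<bar>w\<bar> = (1::real)"
  shows "max 0 (w * x + b) = max 0 (x - (- b / w)) - (if w = -1 then x - (- b / w) else 0)"
proof (cases "w = 1")
  case True then show ?thesis by simp
next
  case False
  then have "w = -1" using assms by (cases "w \<ge> 0") auto
  then show ?thesis by (simp add: max_def)
qed

lemma relu_ramp:
  fixes w b :: "nat \<Rightarrow> real" and v :: "nat \<Rightarrow> real^'t::finite"
  assumes "\<forall>k<K. \<bar>w k\<bar> = 1"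
  shows "relu_net K w b v a c = (\<lambda>x. (\<Sum>k<K. max 0 (x - (- b k / w k)) *\<^sub>R v k)
     + x *\<^sub>R (a - (\<Sum>k<K. if w k = -1 then v k else 0))
     + (c + (\<Sum>k<K. if w k = -1 then (- b k / w k) *\<^sub>R v k else 0)))"
proof
  fix x
  have t: "max 0 (w k * x + b k) *\<^sub>R v k = max 0 (x - (- b k / w k)) *\<^sub>R v k
     - x *\<^sub>R (if w k = -1 then v k else 0) + (if w k = -1 then (- b k / w k) *\<^sub>R v k else 0)"
    if "k < K" for k
  proof -
    have r: "max 0 (w k * x + b k) = max 0 (x - (- b k / w k)) - (if w k = -1 then x - (- b k / w k) else 0)"
      using ramp_unit[of "w k" x "b k"] assms that by simp
    show ?thesis unfolding r by (cases "w k = -1") (simp_all add: scaleR_diff_left)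
  qed
  have "(\<Sum>k<K. max 0 (w k * x + b k) *\<^sub>R v k) = (\<Sum>k<K. max 0 (x - (- b k / w k)) *\<^sub>R v k)
     - x *\<^sub>R (\<Sum>k<K. if w k = -1 then v k else 0) + (\<Sum>k<K. if w k = -1 then (- b k / w k) *\<^sub>R v k else 0)"
    by (simp add: t sum.distrib sum_subtractf scaleR_sum_right)
  then show "relu_net K w b v a c x = (\<Sum>k<K. max 0 (x - (- b k / w k)) *\<^sub>R v k)
     + x *\<^sub>R (a - (\<Sum>k<K. if w k = -1 then v k else 0))
     + (c + (\<Sum>k<K. if w k = -1 then (- b k / w k) *\<^sub>R v k else 0))"
    unfolding relu_net_def by (simp add: algebra_simps)
qed

locale core =
  fixes N :: nat and p :: "nat \<Rightarrow> real" and y :: "nat \<Rightarrow> real^'t::finite"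
  assumes N2: "2 \<le> N" and pmono: "\<And>i j. i < j \<Longrightarrow> j < N \<Longrightarrow> p i < p j"
begin

definition sl where "sl m = (y (Suc m) - y m) /\<^sub>R (p (Suc m) - p m)"
definition Dx where "Dx m = (if 1 \<le> m \<and> m + 2 \<le> N then sl m - sl (m - 1) else 0)"
definition qv where "qv m = Dx m /\<^sub>R norm (Dx m)"
definition rho where "rho m r = (max 0 (p (Suc m) - r) - max 0 (p m - r)) / (p (Suc m) - p m)"
definition Q where "Q r = - (\<Sum>m<N-1. rho m r *\<^sub>R (qv (Suc m) - qv m))"
definition Lam where "Lam h = - (\<Sum>m<N-1. inner (qv (Suc m) - qv m) ((h (p (Suc m)) - h (p m)) /\<^sub>R (p (Suc m) - p m)))"

lemma qv0: "qv 0 = 0" by (simp add: qv_def Dx_def)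
lemma qvN: "qv (N-1) = 0"
proof -
  have "\<not> (1 \<le> N - 1 \<and> N - 1 + 2 \<le> N)" using N2 by arith
  then show ?thesis using N2 by (simp add: qv_def Dx_def)
qed
lemma tele: "(\<Sum>m<N-1. qv (Suc m) - qv m) = 0"
proof -
  have "(\<Sum>m<N-1. qv (Suc m) - qv m) = qv (N-1) - qv 0" by (rule sum_lessThan_telescope)
  then show ?thesis by (simp only: qv0 qvN) simp
qed
lemma tele': "(\<Sum>m<N - Suc 0. qv (Suc m) - qv m) = 0" using tele by simp

lemma dp_pos: "m < N - 1 \<Longrightarrow> p (Suc m) - p m > 0"
  using pmono[of m "Suc m"] by simp

lemma Lam_ramp:
  assumes "finite I"
  shows "Lam (\<lambda>x. (\<Sum>k\<in>I. max 0 (x - r k) *\<^sub>R v k) + x *\<^sub>R A + B) = (\<Sum>k\<in>I. inner (Q (r k)) (v k))"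
proof -
  define h where "h = (\<lambda>x. (\<Sum>k\<in>I. max 0 (x - r k) *\<^sub>R v k) + x *\<^sub>R A + B)"
  have step: "(h (p (Suc m)) - h (p m)) /\<^sub>R (p (Suc m) - p m) = (\<Sum>k\<in>I. rho m (r k) *\<^sub>R v k) + A"
    if m: "m < N - 1" for m
  proof -
    have ne: "p (Suc m) - p m \<noteq> 0" using dp_pos[OF m] by simp
    have "h (p (Suc m)) - h (p m) = (\<Sum>k\<in>I. (max 0 (p (Suc m) - r k) - max 0 (p m - r k)) *\<^sub>R v k) + (p (Suc m) - p m) *\<^sub>R A"
      by (simp add: h_def algebra_simps sum_subtractf)
    then have "(h (p (Suc m)) - h (p m)) /\<^sub>R (p (Suc m) - p m) =
       (\<Sum>k\<in>I. ((max 0 (p (Suc m) - r k) - max 0 (p m - r k)) / (p (Suc m) - p m)) *\<^sub>R v k) + A"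
      using ne by (simp add: scaleR_add_right scaleR_sum_right divide_inverse_commute)
    then show ?thesis by (simp add: rho_def)
  qed
  have "Lam h = - (\<Sum>m<N-1. (\<Sum>k\<in>I. rho m (r k) * inner (qv (Suc m) - qv m) (v k)) + inner (qv (Suc m) - qv m) A)"
    unfolding Lam_def by (intro arg_cong[where f=uminus] sum.cong refl)
       (simp add: step inner_add_right inner_sum_right)
  also have "\<dots> = - (\<Sum>m<N-1. \<Sum>k\<in>I. rho m (r k) * inner (qv (Suc m) - qv m) (v k)) - inner (\<Sum>m<N-1. qv (Suc m) - qv m) A"
    by (simp add: sum.distrib inner_sum_left)
  also have "\<dots> = - (\<Sum>k\<in>I. \<Sum>m<N-1. rho m (r k) * inner (qv (Suc m) - qv m) (v k))"
    by (simp add: tele' sum.swap[of _ _ I])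
  also have "\<dots> = (\<Sum>k\<in>I. inner (Q (r k)) (v k))"
    by (simp add: Q_def inner_sum_left sum_negf)
  finally show ?thesis by (simp add: h_def)
qed


lemma ple: "i \<le> j \<Longrightarrow> j < N \<Longrightarrow> p i \<le> p j"
  using pmono[of i j] by (cases "i = j") auto

lemma rho_lt: "Suc m \<le> j \<Longrightarrow> j < N \<Longrightarrow> p j \<le> r \<Longrightarrow> rho m r = 0"
  using ple[of "Suc m" j] ple[of m j] by (simp add: rho_def)

lemma rho_gt: "j \<le> m \<Longrightarrow> m < N - 1 \<Longrightarrow> r \<le> p j \<Longrightarrow> rho m r = 1"
proof -
  assume a: "j \<le> m" "m < N - 1" "r \<le> p j"
  then have "Suc m < N" by arith
  then have "r \<le> p m" "r \<le> p (Suc m)" using ple[of j m] ple[of j "Suc m"] a by auto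
  then show ?thesis using dp_pos[OF a(2)] by (simp add: rho_def)
qed

lemma Q_seg:
  assumes j: "j < N - 1" and r: "p j \<le> r" "r \<le> p (Suc j)"
  shows "Q r = (1 - rho j r) *\<^sub>R qv (Suc j) + rho j r *\<^sub>R qv j"
proof -
  define t where "t = rho j r"
  have eq: "rho m r *\<^sub>R (qv (Suc m) - qv m) =
     (if m < Suc j then 0 else qv (Suc m) - qv m) + (if m = j then t *\<^sub>R (qv (Suc m) - qv m) else 0)"
    if m: "m < N - 1" for m
  proof (cases "m < j")
    case True then show ?thesis using rho_lt[of m j r] j r by simp
  next
    case False
    show ?thesis
    proof (cases "m = j")
      case True then show ?thesis by (simp add: t_def)
    next
      case False
      then have "Suc j \<le> m" using \<open>\<not> m < j\<close> by simp
      then show ?thesis using rho_gt[of "Suc j" m r] m r False by simp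
    qed
  qed
  have "(\<Sum>m<N-1. rho m r *\<^sub>R (qv (Suc m) - qv m)) =
      (\<Sum>m<N-1. (if m < Suc j then 0 else qv (Suc m) - qv m)) + t *\<^sub>R (qv (Suc j) - qv j)"
    using j by (simp add: eq sum.distrib)
  also have "(\<Sum>m<N-1. (if m < Suc j then 0 else qv (Suc m) - qv m)) =
     (\<Sum>m<N-1. qv (Suc m) - qv m) - (\<Sum>m<N-1. (if m \<in> {..<Suc j} then qv (Suc m) - qv m else 0))"
    by (simp add: sum_subtractf[symmetric] if_distrib cong: if_cong)
  also have "(\<Sum>m<N-1. (if m \<in> {..<Suc j} then qv (Suc m) - qv m else 0)) = (\<Sum>m\<in>{..<N-1} \<inter> {..<Suc j}. qv (Suc m) - qv m)"
    by (simp add: sum.inter_restrict)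
  also have "{..<N-1} \<inter> {..<Suc j} = {..<Suc j}" using j by auto
  also have "(\<Sum>m<Suc j. qv (Suc m) - qv m) = qv (Suc j) - qv 0" by (rule sum_lessThan_telescope)
  finally have X: "(\<Sum>m<N-1. rho m r *\<^sub>R (qv (Suc m) - qv m)) = ((\<Sum>m<N-1. qv (Suc m) - qv m) - (qv (Suc j) - qv 0)) + t *\<^sub>R (qv (Suc j) - qv j)" .
  have "(\<Sum>m<N-1. rho m r *\<^sub>R (qv (Suc m) - qv m)) = - qv (Suc j) + t *\<^sub>R (qv (Suc j) - qv j)"
    unfolding X tele qv0 by simp
  then show ?thesis by (simp add: Q_def t_def algebra_simps)
qed

lemma rho_j: "j < N - 1 \<Longrightarrow> p j \<le> r \<Longrightarrow> r \<le> p (Suc j) \<Longrightarrow> rho j r = (p (Suc j) - r) / (p (Suc j) - p j)"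
  by (simp add: rho_def)

lemma Q_out1: "r \<le> p 0 \<Longrightarrow> Q r = 0"
  using rho_gt[of 0 _ r] by (simp add: Q_def tele')

lemma Q_out2: "p (N - 1) \<le> r \<Longrightarrow> Q r = 0"
proof -
  assume r: "p (N - 1) \<le> r"
  have "rho m r = 0" if "m < N - 1" for m
    using rho_lt[of m "N-1" r] that r N2 by simp
  then show ?thesis by (simp add: Q_def)
qed

lemma seg_exists:
  assumes "p 0 \<le> r" "r \<le> p (N - 1)"
  shows "\<exists>j<N-1. p j \<le> r \<and> r \<le> p (Suc j)"
proof -
  have "\<forall>n. Suc n < N \<longrightarrow> r \<le> p (Suc n) \<longrightarrow> (\<exists>j\<le>n. p j \<le> r \<and> r \<le> p (Suc j))"
  proof
    fix n show "Suc n < N \<longrightarrow> r \<le> p (Suc n) \<longrightarrow> (\<exists>j\<le>n. p j \<le> r \<and> r \<le> p (Suc j))"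
    proof (induction n)
      case 0 then show ?case using assms by auto
    next
      case (Suc n)
      show ?case
      proof (intro impI)
        assume a: "Suc (Suc n) < N" "r \<le> p (Suc (Suc n))"
        show "\<exists>j\<le>Suc n. p j \<le> r \<and> r \<le> p (Suc j)"
        proof (cases "r \<le> p (Suc n)")
          case True
          then obtain j where "j \<le> n" "p j \<le> r" "r \<le> p (Suc j)" using Suc.IH a by auto
          then show ?thesis by (intro exI[of _ j]) auto
        next
          case False then show ?thesis using a by (intro exI[of _ "Suc n"]) auto
        qed
      qed
    qed
  qed
  moreover have "Suc (N - 2) < N" "Suc (N - 2) = N - 1" using N2 by auto
  ultimately obtain j where "j \<le> N - 2" "p j \<le> r" "r \<le> p (Suc j)" using assms by metis
  moreover have "j < N - 1" using \<open>j \<le> N - 2\<close> N2 by arith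
  ultimately show ?thesis by blast
qed

lemma qv_norm_eq: "norm (qv m) = (if Dx m = 0 then 0 else 1)"
  by (simp add: qv_def)

lemma qv_norm: "norm (qv m) \<le> 1" "norm (qv m) = 1 \<longleftrightarrow> Dx m \<noteq> 0"
  by (simp_all add: qv_norm_eq)

lemma strict_conv:
  fixes a b :: "'a::real_inner"
  assumes "norm a \<le> 1" "norm b \<le> 1" "0 < t" "t < 1" "norm ((1 - t) *\<^sub>R a + t *\<^sub>R b) = 1"
  shows "a = b \<and> norm a = 1"
proof -
  have "1 \<le> norm ((1 - t) *\<^sub>R a) + norm (t *\<^sub>R b)" using assms(5) norm_triangle_ineq by metis
  also have "\<dots> = (1 - t) * norm a + t * norm b" using assms(3,4) by simp
  finally have s: "1 \<le> (1 - t) * norm a + t * norm b" .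
  have na: "norm a = 1"
  proof (rule ccontr)
    assume "norm a \<noteq> 1" then have "norm a < 1" using assms(1) by simp
    then have "(1 - t) * norm a < (1 - t) * 1" using assms(4) by (intro mult_strict_left_mono) auto
    moreover have "t * norm b \<le> t * 1" using assms(2,3) by (intro mult_left_mono) auto
    ultimately show False using s by simp
  qed
  have nb: "norm b = 1"
  proof (rule ccontr)
    assume "norm b \<noteq> 1" then have "norm b < 1" using assms(2) by simp
    then have "t * norm b < t * 1" using assms(3) by (intro mult_strict_left_mono) auto
    moreover have "(1 - t) * norm a \<le> (1 - t) * 1" using assms(1,4) by (intro mult_left_mono) auto
    ultimately show False using s by simp
  qed
  have "norm ((1 - t) *\<^sub>R a + t *\<^sub>R b) = norm ((1 - t) *\<^sub>R a) + norm (t *\<^sub>R b)"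
    using assms(3,4,5) na nb by simp
  then have "norm ((1 - t) *\<^sub>R a) *\<^sub>R (t *\<^sub>R b) = norm (t *\<^sub>R b) *\<^sub>R ((1 - t) *\<^sub>R a)"
    by (rule norm_triangle_eq[THEN iffD1])
  then have "((1 - t) * t) *\<^sub>R b = ((1 - t) * t) *\<^sub>R a" using assms(3,4) na nb by (simp add: mult.commute)
  moreover have "(1 - t) * t \<noteq> 0" using assms(3,4) by simp
  ultimately show ?thesis using na by simp
qed

lemma Q_norm_le: "norm (Q r) \<le> 1"
proof (cases "r \<le> p 0")
  case True then show ?thesis by (simp add: Q_out1)
next
  case False
  show ?thesis
  proof (cases "p (N - 1) \<le> r")
    case True then show ?thesis by (simp add: Q_out2)
  next
    case F2: False
    then obtain j where j: "j < N - 1" "p j \<le> r" "r \<le> p (Suc j)"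
      using seg_exists[of r] False by auto
    define t where "t = rho j r"
    have t01: "0 \<le> t" "t \<le> 1" using j dp_pos[OF j(1)] by (auto simp: t_def rho_j)
    have "norm (Q r) \<le> (1 - t) * norm (qv (Suc j)) + t * norm (qv j)"
      using Q_seg[OF j] t01 norm_triangle_ineq[of "(1 - t) *\<^sub>R qv (Suc j)" "t *\<^sub>R qv j"]
      by (simp add: t_def[symmetric])
    also have "\<dots> \<le> (1 - t) * 1 + t * 1"
      using t01 qv_norm(1) by (intro add_mono mult_left_mono) auto
    finally show ?thesis by simp
  qed
qed

lemma Q_at: "m < N \<Longrightarrow> Q (p m) = qv m"
proof -
  assume m: "m < N"
  show ?thesis
  proof (cases "m < N - 1")
    case True
    have "rho m (p m) = 1" using rho_j[OF True] dp_pos[OF True] by simp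
    then show ?thesis using Q_seg[OF True] ple[of m "Suc m"] True by simp
  next
    case False
    then have "m = N - 1" using m by simp
    then show ?thesis using Q_out2 qvN by simp
  qed
qed

lemma Q_norm_one:
  assumes gen: "\<And>m. 1 \<le> m \<Longrightarrow> m + 3 \<le> N \<Longrightarrow> qv m \<noteq> qv (Suc m)"
    and n1: "norm (Q r) = 1"
  shows "\<exists>m. 1 \<le> m \<and> m + 2 \<le> N \<and> r = p m"
proof -
  have Dxi: "1 \<le> m \<and> m + 2 \<le> N" if "norm (qv m) = 1" for m
    using that qv_norm(2)[of m] by (auto simp: Dx_def split: if_splits)
  have nout1: "\<not> r \<le> p 0" using n1 Q_out1 by force
  have nout2: "\<not> p (N - 1) \<le> r" using n1 Q_out2 by force
  obtain j where j: "j < N - 1" "p j \<le> r" "r \<le> p (Suc j)"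
    using seg_exists[of r] nout1 nout2 by auto
  define t where "t = rho j r"
  have tdef: "t = (p (Suc j) - r) / (p (Suc j) - p j)" using rho_j[OF j] by (simp add: t_def)
  have dpos: "p (Suc j) - p j > 0" using dp_pos[OF j(1)] .
  have Qr: "Q r = (1 - t) *\<^sub>R qv (Suc j) + t *\<^sub>R qv j" using Q_seg[OF j] by (simp add: t_def)
  show ?thesis
  proof (cases "r = p j")
    case True
    then have "t = 1" using tdef dpos by simp
    then have "norm (qv j) = 1" using Qr n1 by simp
    then show ?thesis using Dxi True by blast
  next
    case rj: False
    show ?thesis
    proof (cases "r = p (Suc j)")
      case True
      then have "t = 0" using tdef by simp
      then have "norm (qv (Suc j)) = 1" using Qr n1 by simp
      then show ?thesis using Dxi True by blast
    next
      case False
      then have "0 < t" "t < 1" using rj j dpos by (auto simp: tdef field_simps)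
      then have "qv (Suc j) = qv j \<and> norm (qv (Suc j)) = 1"
        using strict_conv[of "qv (Suc j)" "qv j" t] qv_norm(1) Qr n1 by auto
      then have "norm (qv j) = 1" "norm (qv (Suc j)) = 1" "qv j = qv (Suc j)" by auto
      then have "1 \<le> j" "Suc j + 2 \<le> N" using Dxi by blast+
      then have False using gen[of j] \<open>qv j = qv (Suc j)\<close> by simp
      then show ?thesis ..
    qed
  qed
qed


definition F where "F x = (\<Sum>m<N. max 0 (x - p m) *\<^sub>R Dx m) + x *\<^sub>R sl 0 + (y 0 - p 0 *\<^sub>R sl 0)"

lemma y_step: "m < N - 1 \<Longrightarrow> y (Suc m) = y m + (p (Suc m) - p m) *\<^sub>R sl m"
  using dp_pos[of m] by (simp add: sl_def)

lemma F_aff: "j \<le> N - 2 \<Longrightarrow> (\<Sum>m\<in>{1..j}. (x - p m) *\<^sub>R Dx m) + x *\<^sub>R sl 0 + (y 0 - p 0 *\<^sub>R sl 0) = y j + (x - p j) *\<^sub>R sl j"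
proof (induction j)
  case 0 then show ?case by (simp add: algebra_simps)
next
  case (Suc j)
  then have j: "j < N - 1" "Suc j \<le> N - 2" by auto
  have "Suc j + 2 \<le> N" using j N2 by arith
  then have D: "Dx (Suc j) = sl (Suc j) - sl j" by (simp add: Dx_def)
  define S where "S = (\<Sum>m\<in>{1..j}. (x - p m) *\<^sub>R Dx m)"
  have jj: "j \<le> N - 2" using Suc.prems by simp
  note IH' = Suc.IH[OF jj, folded S_def]
  have "(\<Sum>m\<in>{1..Suc j}. (x - p m) *\<^sub>R Dx m) = S + (x - p (Suc j)) *\<^sub>R Dx (Suc j)"
    by (simp add: S_def)
  then have "(\<Sum>m\<in>{1..Suc j}. (x - p m) *\<^sub>R Dx m) + x *\<^sub>R sl 0 + (y 0 - p 0 *\<^sub>R sl 0)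
      = (S + x *\<^sub>R sl 0 + (y 0 - p 0 *\<^sub>R sl 0)) + (x - p (Suc j)) *\<^sub>R Dx (Suc j)"
    by (simp add: algebra_simps)
  also have "\<dots> = y j + (x - p j) *\<^sub>R sl j + (x - p (Suc j)) *\<^sub>R (sl (Suc j) - sl j)"
    by (simp only: IH' D)
  also have "\<dots> = y (Suc j) + (x - p (Suc j)) *\<^sub>R sl (Suc j)"
    using y_step[OF j(1)] by (simp add: algebra_simps)
  finally show ?case .
qed

lemma F_on:
  assumes j: "j \<le> N - 2" and lo: "\<And>m. 1 \<le> m \<Longrightarrow> m \<le> j \<Longrightarrow> p m \<le> x"
    and hi: "\<And>m. j < m \<Longrightarrow> m + 2 \<le> N \<Longrightarrow> x \<le> p m"
  shows "F x = y j + (x - p j) *\<^sub>R sl j"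
proof -
  have "(\<Sum>m<N. max 0 (x - p m) *\<^sub>R Dx m) = (\<Sum>m\<in>{1..j}. (x - p m) *\<^sub>R Dx m)"
  proof (rule sum.mono_neutral_cong_right)
    show "{1..j} \<subseteq> {..<N}" using j N2 by auto
    show "\<forall>i\<in>{..<N} - {1..j}. max 0 (x - p i) *\<^sub>R Dx i = 0"
    proof
      fix i assume i: "i \<in> {..<N} - {1..j}"
      show "max 0 (x - p i) *\<^sub>R Dx i = 0"
      proof (cases "1 \<le> i \<and> i + 2 \<le> N")
        case True
        then have "j < i" using i by auto
        then have "x \<le> p i" using hi True by auto
        then show ?thesis by simp
      next
        case False
        have "Dx i = 0" unfolding Dx_def by (rule if_not_P[OF False])
        then show ?thesis by simp
      qed
    qed
    show "max 0 (x - p i) *\<^sub>R Dx i = (x - p i) *\<^sub>R Dx i" if "i \<in> {1..j}" for i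
      using lo[of i] that by auto
  qed simp
  then show ?thesis unfolding F_def using F_aff[OF j, of x] by simp
qed

lemma F_at: "m < N \<Longrightarrow> F (p m) = y m"
proof -
  assume m: "m < N"
  show ?thesis
  proof (cases "m \<le> N - 2")
    case True
    have "F (p m) = y m + (p m - p m) *\<^sub>R sl m"
      by (rule F_on[OF True]) (use ple m True in auto)
    then show ?thesis by simp
  next
    case False
    then have mN: "m = N - 1" using m by arith
    have "F (p m) = y (N - 2) + (p m - p (N - 2)) *\<^sub>R sl (N - 2)"
      by (rule F_on) (use ple m mN in auto)
    also have "\<dots> = y (Suc (N - 2))" using y_step[of "N - 2"] N2 mN
      by (simp add: Suc_diff_Suc numeral_2_eq_2)
    also have "Suc (N - 2) = m" using mN N2 by arith
    finally show ?thesis .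
  qed
qed

lemma p_inj: "m < N \<Longrightarrow> m' < N \<Longrightarrow> p m = p m' \<Longrightarrow> m = m'"
  using pmono[of m m'] pmono[of m' m] by (cases m m' rule: linorder_cases) auto

lemma vanish:
  fixes E :: "nat \<Rightarrow> 'a::real_vector"
  assumes E0: "E 0 = 0" and EN: "E (N - 1) = 0"
    and z: "\<And>j. j < N \<Longrightarrow> (\<Sum>m<N. max 0 (p j - p m) *\<^sub>R E m) + p j *\<^sub>R A + B = 0"
  shows "(\<forall>m<N. E m = 0) \<and> A = 0 \<and> B = 0"
proof -
  have s0: "(\<Sum>m<N. max 0 (p 0 - p m) *\<^sub>R E m) = 0"
  proof (rule sum.neutral, intro ballI)
    fix m assume "m \<in> {..<N}"
    then have "p 0 \<le> p m" using ple[of 0 m] by simp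
    then show "max 0 (p 0 - p m) *\<^sub>R E m = 0" by simp
  qed
  have s1: "(\<Sum>m<N. max 0 (p 1 - p m) *\<^sub>R E m) = 0"
  proof (rule sum.neutral, intro ballI)
    fix m assume "m \<in> {..<N}"
    then show "max 0 (p 1 - p m) *\<^sub>R E m = 0"
      using ple[of 1 m] E0 by (cases m) auto
  qed
  have e0: "p 0 *\<^sub>R A + B = 0" using z[of 0] s0 N2 by simp
  have e1: "p 1 *\<^sub>R A + B = 0" using z[of 1] s1 N2 by simp
  have "(p 1 - p 0) *\<^sub>R A = (p 1 *\<^sub>R A + B) - (p 0 *\<^sub>R A + B)" by (simp add: algebra_simps)
  also have "\<dots> = 0" using e0 e1 by simp
  finally have "(p 1 - p 0) *\<^sub>R A = 0" .
  moreover have "p 1 - p 0 \<noteq> 0" using pmono[of 0 1] N2 by simp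
  ultimately have A: "A = 0" by simp
  then have B: "B = 0" using e0 by simp
  have "E j = 0" if "Suc j < N" for j
    using that
  proof (induction j rule: less_induct)
    case (less j)
    show ?case
    proof (cases "j = 0")
      case True then show ?thesis using E0 by simp
    next
      case False
      have eq: "max 0 (p (Suc j) - p m) *\<^sub>R E m = (if m = j then (p (Suc j) - p j) *\<^sub>R E j else 0)"
        if m: "m \<in> {..<N}" for m
      proof (cases m j rule: linorder_cases)
        case less
        then show ?thesis using less.IH[of m] less.prems by simp
      next
        case equal
        then show ?thesis using ple[of j "Suc j"] less.prems by simp
      next
        case greater
        then show ?thesis using ple[of "Suc j" m] m by simp
      qed
      have "(\<Sum>m<N. max 0 (p (Suc j) - p m) *\<^sub>R E m) = (\<Sum>m<N. (if m = j then (p (Suc j) - p j) *\<^sub>R E j else 0))"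
        by (rule sum.cong[OF refl]) (rule eq)
      also have "\<dots> = (p (Suc j) - p j) *\<^sub>R E j" using less.prems by simp
      finally have "(\<Sum>m<N. max 0 (p (Suc j) - p m) *\<^sub>R E m) = (p (Suc j) - p j) *\<^sub>R E j" .
      then have "(p (Suc j) - p j) *\<^sub>R E j = 0" using z[OF less.prems] A B by simp
      moreover have "p (Suc j) - p j \<noteq> 0" using pmono[of j "Suc j"] less.prems by simp
      ultimately show ?thesis by simp
    qed
  qed
  then have "\<forall>m<N. E m = 0" using EN
    by (metis Suc_lessI diff_Suc_1)
  then show ?thesis using A B by simp
qed


lemma regroup:
  fixes v :: "nat \<Rightarrow> 'a::real_vector"
  assumes "finite I" and ex: "\<And>k. k \<in> I \<Longrightarrow> v k \<noteq> 0 \<Longrightarrow> \<exists>m<N. r k = p m"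
  shows "(\<Sum>k\<in>I. max 0 (x - r k) *\<^sub>R v k) =
         (\<Sum>m<N. max 0 (x - p m) *\<^sub>R (\<Sum>k\<in>{k\<in>I. v k \<noteq> 0 \<and> r k = p m}. v k))"
proof -
  have "(\<Sum>m<N. max 0 (x - p m) *\<^sub>R (\<Sum>k\<in>{k\<in>I. v k \<noteq> 0 \<and> r k = p m}. v k)) =
        (\<Sum>m<N. \<Sum>k\<in>I. if v k \<noteq> 0 \<and> r k = p m then max 0 (x - p m) *\<^sub>R v k else 0)"
    using assms(1) by (simp add: sum.inter_filter scaleR_sum_right if_distrib cong: if_cong)
  also have "\<dots> = (\<Sum>k\<in>I. \<Sum>m<N. if v k \<noteq> 0 \<and> r k = p m then max 0 (x - p m) *\<^sub>R v k else 0)"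
    by (rule sum.swap)
  also have "\<dots> = (\<Sum>k\<in>I. max 0 (x - r k) *\<^sub>R v k)"
  proof (rule sum.cong[OF refl])
    fix k assume k: "k \<in> I"
    show "(\<Sum>m<N. if v k \<noteq> 0 \<and> r k = p m then max 0 (x - p m) *\<^sub>R v k else 0) = max 0 (x - r k) *\<^sub>R v k"
    proof (cases "v k = 0")
      case True then show ?thesis by simp
    next
      case False
      then obtain m0 where m0: "m0 < N" "r k = p m0" using ex[OF k] by blast
      have "(\<Sum>m<N. if v k \<noteq> 0 \<and> r k = p m then max 0 (x - p m) *\<^sub>R v k else 0) =
            (\<Sum>m<N. if m = m0 then max 0 (x - p m0) *\<^sub>R v k else 0)"
      proof (rule sum.cong[OF refl])
        fix m assume "m \<in> {..<N}"
        then have "r k = p m \<longleftrightarrow> m = m0" using m0 p_inj[of m m0] by auto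
        then show "(if v k \<noteq> 0 \<and> r k = p m then max 0 (x - p m) *\<^sub>R v k else 0) =
            (if m = m0 then max 0 (x - p m0) *\<^sub>R v k else 0)" using False by auto
      qed
      also have "\<dots> = max 0 (x - r k) *\<^sub>R v k" using m0 by simp
      finally show ?thesis .
    qed
  qed
  finally show ?thesis by simp
qed

lemma Lam_cong: "(\<And>m. m < N \<Longrightarrow> h (p m) = g (p m)) \<Longrightarrow> Lam h = Lam g"
  unfolding Lam_def by (intro arg_cong[where f=uminus] sum.cong refl) auto

lemma inner_qv: "inner (qv m) (Dx m) = norm (Dx m)"
  by (cases "Dx m = 0") (simp_all add: qv_def power2_norm_eq_inner[symmetric] power2_eq_square)

lemma Lam_F: "Lam F = (\<Sum>m<N. norm (Dx m))"
proof -
  have "Lam F = (\<Sum>m<N. inner (Q (p m)) (Dx m))"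
    unfolding F_def by (rule Lam_ramp) simp
  also have "\<dots> = (\<Sum>m<N. norm (Dx m))"
    by (rule sum.cong[OF refl]) (simp add: Q_at inner_qv)
  finally show ?thesis .
qed


lemma Dx_zero: "N \<le> k + 1 \<Longrightarrow> Dx k = 0" "Dx 0 = 0"
  by (simp_all add: Dx_def)

lemma sumK: "N \<le> K \<Longrightarrow> (\<Sum>k<K. f k) = (\<Sum>k<N. f k)" if "\<And>k. N \<le> k \<Longrightarrow> f k = 0" for f :: "nat \<Rightarrow> 'a::comm_monoid_add"
  by (rule sum.mono_neutral_cong_left[symmetric]) (use that in auto)

lemma relu_D: "N \<le> K \<Longrightarrow> relu_net K (\<lambda>_. 1) (\<lambda>k. - p k) Dx (sl 0) (y 0 - p 0 *\<^sub>R sl 0) = F"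
proof
  fix x assume K: "N \<le> K"
  have "(\<Sum>k<K. max 0 (1 * x + - p k) *\<^sub>R Dx k) = (\<Sum>k<N. max 0 (1 * x + - p k) *\<^sub>R Dx k)"
    by (rule sumK[OF _ K]) (simp add: Dx_zero)
  then show "relu_net K (\<lambda>_. 1) (\<lambda>k. - p k) Dx (sl 0) (y 0 - p 0 *\<^sub>R sl 0) x = F x"
    unfolding relu_net_def F_def by simp
qed

lemma cost_D: "N \<le> K \<Longrightarrow> net_cost K Dx = (\<Sum>m<N. norm (Dx m))"
  unfolding net_cost_def by (rule sumK) (simp_all add: Dx_zero)

lemma core_eq:
  assumes w1: "\<forall>k<K. \<bar>w k\<bar> = 1" and fe: "\<forall>m<N. relu_net K w b v a c (p m) = y m"
  shows "(\<Sum>k<K. inner (Q (- b k / w k)) (v k)) = (\<Sum>m<N. norm (Dx m))"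
proof -
  have "Lam (relu_net K w b v a c) = Lam F"
    by (rule Lam_cong) (simp add: fe F_at)
  moreover have "Lam (relu_net K w b v a c) = (\<Sum>k<K. inner (Q (- b k / w k)) (v k))"
    unfolding relu_ramp[OF w1] by (rule Lam_ramp) simp
  ultimately show ?thesis using Lam_F by simp
qed

lemma core_lower:
  assumes w1: "\<forall>k<K. \<bar>w k\<bar> = 1" and fe: "\<forall>m<N. relu_net K w b v a c (p m) = y m"
  shows "(\<Sum>m<N. norm (Dx m)) \<le> net_cost K v"
proof -
  have "(\<Sum>m<N. norm (Dx m)) = (\<Sum>k<K. inner (Q (- b k / w k)) (v k))" using core_eq[OF w1 fe] by simp
  also have "\<dots> \<le> (\<Sum>k<K. norm (v k))"
  proof (rule sum_mono)
    fix k
    have "inner (Q (- b k / w k)) (v k) \<le> norm (Q (- b k / w k)) * norm (v k)" by (rule norm_cauchy_schwarz)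
    also have "\<dots> \<le> 1 * norm (v k)" using Q_norm_le by (intro mult_right_mono) auto
    finally show "inner (Q (- b k / w k)) (v k) \<le> norm (v k)" by simp
  qed
  finally show ?thesis by (simp add: net_cost_def)
qed

lemma core_unique:
  assumes gen: "\<And>m. 1 \<le> m \<Longrightarrow> m + 3 \<le> N \<Longrightarrow> qv m \<noteq> qv (Suc m)"
    and w1: "\<forall>k<K. \<bar>w k\<bar> = 1" and fe: "\<forall>m<N. relu_net K w b v a c (p m) = y m"
    and cost: "net_cost K v \<le> (\<Sum>m<N. norm (Dx m))"
  shows "relu_net K w b v a c = F"
proof -
  define r where "r k = - b k / w k" for k
  have ge: "0 \<le> norm (v k) - inner (Q (r k)) (v k)" for k
  proof -
    have "inner (Q (r k)) (v k) \<le> norm (Q (r k)) * norm (v k)" by (rule norm_cauchy_schwarz)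
    also have "\<dots> \<le> 1 * norm (v k)" using Q_norm_le by (intro mult_right_mono) auto
    finally show ?thesis by simp
  qed
  have "(\<Sum>k<K. norm (v k) - inner (Q (r k)) (v k)) = net_cost K v - (\<Sum>m<N. norm (Dx m))"
    using core_eq[OF w1 fe] by (simp add: net_cost_def sum_subtractf r_def)
  also have "\<dots> \<le> 0" using cost by simp
  moreover have "0 \<le> (\<Sum>k<K. norm (v k) - inner (Q (r k)) (v k))"
    by (rule sum_nonneg) (rule ge)
  ultimately have "(\<Sum>k<K. norm (v k) - inner (Q (r k)) (v k)) = 0" by linarith
  then have each: "norm (v k) = inner (Q (r k)) (v k)" if "k < K" for k
    using sum_nonneg_eq_0_iff[of "{..<K}" "\<lambda>k. norm (v k) - inner (Q (r k)) (v k)"] ge that by auto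
  have ex: "\<exists>m. 1 \<le> m \<and> m + 2 \<le> N \<and> r k = p m" if k: "k < K" and vk: "v k \<noteq> 0" for k
  proof -
    have "norm (v k) \<le> norm (Q (r k)) * norm (v k)" using each[OF k] norm_cauchy_schwarz by metis
    then have "1 \<le> norm (Q (r k))" using vk by simp
    then have "norm (Q (r k)) = 1" using Q_norm_le[of "r k"] by simp
    then show ?thesis using Q_norm_one[OF gen] by blast
  qed
  define E where "E m = (\<Sum>k\<in>{k\<in>{..<K}. v k \<noteq> 0 \<and> r k = p m}. v k)" for m
  define A' where "A' = a - (\<Sum>k<K. if w k = -1 then v k else 0)"
  define B' where "B' = c + (\<Sum>k<K. if w k = -1 then (- b k / w k) *\<^sub>R v k else 0)"
  have rel: "relu_net K w b v a c x = (\<Sum>m<N. max 0 (x - p m) *\<^sub>R E m) + x *\<^sub>R A' + B'" for x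
  proof -
    have "(\<Sum>k<K. max 0 (x - r k) *\<^sub>R v k) = (\<Sum>m<N. max 0 (x - p m) *\<^sub>R E m)"
      unfolding E_def
    proof (rule regroup)
      fix k assume "k \<in> {..<K}" "v k \<noteq> 0"
      then obtain m where "1 \<le> m" "m + 2 \<le> N" "r k = p m" using ex by blast
      then show "\<exists>m<N. r k = p m" by (intro exI[of _ m]) auto
    qed simp
    then show ?thesis unfolding relu_ramp[OF w1] A'_def B'_def r_def by simp
  qed
  have Eb: "E m = 0" if "m = 0 \<or> m = N - 1" for m
  proof -
    have "{k\<in>{..<K}. v k \<noteq> 0 \<and> r k = p m} = {}"
    proof (rule ccontr)
      assume "{k\<in>{..<K}. v k \<noteq> 0 \<and> r k = p m} \<noteq> {}"
      then obtain k where k: "k < K" "v k \<noteq> 0" "r k = p m" by auto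
      then obtain m' where m': "1 \<le> m'" "m' + 2 \<le> N" "r k = p m'" using ex by blast
      have "m' = m" using p_inj[of m' m] m' k that N2 by auto
      then show False using that m' by auto
    qed
    then show ?thesis unfolding E_def by (simp only: sum.empty)
  qed
  define B0 where "B0 = y 0 - p 0 *\<^sub>R sl 0"
  have G: "relu_net K w b v a c x - F x = (\<Sum>m<N. max 0 (x - p m) *\<^sub>R (E m - Dx m)) + x *\<^sub>R (A' - sl 0) + (B' - B0)" for x
    unfolding rel F_def B0_def by (simp add: scaleR_diff_right sum_subtractf algebra_simps)
  have van: "(\<forall>m<N. E m - Dx m = 0) \<and> A' - sl 0 = 0 \<and> B' - B0 = 0"
  proof (rule vanish)
    show "E 0 - Dx 0 = 0" using Eb Dx_zero by simp
    show "E (N - 1) - Dx (N - 1) = 0" using Eb Dx_zero N2 by simp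
    fix j assume "j < N"
    then show "(\<Sum>m<N. max 0 (p j - p m) *\<^sub>R (E m - Dx m)) + p j *\<^sub>R (A' - sl 0) + (B' - B0) = 0"
      using G[of "p j"] fe F_at by simp
  qed
  show ?thesis
  proof
    fix x
    have "relu_net K w b v a c x - F x = 0" unfolding G using van by simp
    then show "relu_net K w b v a c x = F x" by simp
  qed
qed

end



lemma generic_unique:
  fixes d :: "('n::finite, 't::finite) data"
  assumes t12: "t1 \<noteq> t2" and N2: "2 \<le> CARD('n)" and NK: "CARD('n) \<le> K" and gen: "generic t1 t2 d"
  shows "ctd_unique_solution K d"
proof -
  obtain x Y where d: "d = (x, Y)" by (cases d)
  have inj: "inj (($) x)" using gen d by (simp add: generic_def)
  define N where "N = CARD('n)"
  define s where "s = sorted_list_of_set (range (\<lambda>i. x $ i))"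
  have sset: "set s = range (\<lambda>i. x $ i)" by (simp add: s_def)
  have slen: "length s = N"
    unfolding s_def N_def using card_image[OF inj] by simp
  have ssort: "sorted_wrt (<) s" unfolding s_def by (rule strict_sorted_list_of_set)
  define p where "p m = s ! m" for m
  define ix where "ix m = (THE i. x $ i = p m)" for m
  have ix: "x $ ix m = p m" if "m < N" for m
  proof -
    have "p m \<in> range (\<lambda>i. x $ i)" using that slen sset unfolding p_def by (metis nth_mem)
    then obtain i where i: "x $ i = p m" by auto
    have "(THE i. x $ i = p m) = i"
    proof (rule the_equality)
      show "x $ i = p m" by (rule i)
      fix i' assume "x $ i' = p m"
      then show "i' = i" using i inj by (metis injD)
    qed
    then show ?thesis using i by (simp add: ix_def)
  qed
  have ix_unique: "ix m = i" if "m < N" "x $ i = p m" for m i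
    using ix[OF that(1)] that(2) inj by (metis injD)
  define y where "y m = Y $ ix m" for m
  have ylab: "ctd_label d (p m) = y m" for m
    by (simp add: ctd_label_def d y_def ix_def)
  have pmono: "p i < p j" if "i < j" "j < N" for i j
    using ssort that slen unfolding p_def by (simp add: sorted_wrt_nth_less)
  interpret C: core N p y
    by unfold_locales (use N2 pmono N_def in auto)
  have ix_inj: "ix m = ix m' \<Longrightarrow> m < N \<Longrightarrow> m' < N \<Longrightarrow> m = m'" for m m'
    using ix C.p_inj by metis
  have feas_iff: "feasible K d w b v a c \<longleftrightarrow> (\<forall>k<K. \<bar>w k\<bar> = 1) \<and> (\<forall>m<N. relu_net K w b v a c (p m) = y m)"
    for w b v a c
  proof -
    have "(\<forall>i. relu_net K w b v a c (x $ i) = Y $ i) \<longleftrightarrow> (\<forall>m<N. relu_net K w b v a c (p m) = y m)"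
    proof
      assume h: "\<forall>i. relu_net K w b v a c (x $ i) = Y $ i"
      show "\<forall>m<N. relu_net K w b v a c (p m) = y m"
        using h ix by (metis y_def)
    next
      assume h: "\<forall>m<N. relu_net K w b v a c (p m) = y m"
      show "\<forall>i. relu_net K w b v a c (x $ i) = Y $ i"
      proof
        fix i
        have "x $ i \<in> set s" using sset by auto
        then obtain m where m: "m < N" "p m = x $ i" using slen unfolding p_def by (metis in_set_conv_nth)
        then have "ix m = i" using ix_unique by simp
        then show "relu_net K w b v a c (x $ i) = Y $ i" using h m by (metis y_def)
      qed
    qed
    then show ?thesis by (simp add: feasible_def d)
  qed
  have "ctd_interp d = C.F"
  proof
    fix t
    have rng: "range (\<lambda>i. fst d $ i) = range (\<lambda>i. x $ i)" by (simp add: d)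
    define j where "j = (if t < s ! 0 then 0 else (GREATEST j. j < length s - 1 \<and> s ! j \<le> t))"
    have ci: "ctd_interp d t = ctd_seg d (s ! j) (s ! (j + 1)) t"
      unfolding ctd_interp_def rng s_def[symmetric] j_def Let_def by simp
    have jprops: "j \<le> N - 2 \<and> (\<forall>m. 1 \<le> m \<longrightarrow> m \<le> j \<longrightarrow> p m \<le> t) \<and> (\<forall>m. j < m \<longrightarrow> m + 2 \<le> N \<longrightarrow> t \<le> p m)"
    proof (cases "t < p 0")
      case True
      then have "j = 0" by (simp add: j_def p_def)
      have "t \<le> p m" if "m + 2 \<le> N" for m
      proof -
        have "p 0 \<le> p m" using C.ple[of 0 m] that by simp
        then show ?thesis using True by simp
      qed
      then show ?thesis using \<open>j = 0\<close> by auto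
    next
      case False
      define P where "P j \<longleftrightarrow> j < N - 1 \<and> p j \<le> t" for j
      have Peq: "P = (\<lambda>j. j < length s - 1 \<and> s ! j \<le> t)" by (auto simp: P_def p_def slen fun_eq_iff)
      have jG: "j = Greatest P" using False unfolding Peq j_def by (simp add: p_def)
      have P0: "P 0" using False N2 by (simp add: P_def N_def)
      have bnd: "\<And>y. P y \<Longrightarrow> y \<le> N" by (auto simp: P_def)
      have Pj: "P j" using GreatestI_nat[of P 0 N, OF P0 bnd] jG by simp
      have maxj: "m \<le> j" if "P m" for m using Greatest_le_nat[of P m N, OF that bnd] jG by simp
      show ?thesis
      proof (intro conjI allI impI)
        show "j \<le> N - 2" using Pj unfolding P_def by arith
        fix m
        show "p m \<le> t" if "1 \<le> m" "m \<le> j"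
        proof -
          have "j < N" using Pj unfolding P_def by arith
          then have "p m \<le> p j" using C.ple[of m j] that by simp
          then show ?thesis using Pj unfolding P_def by simp
        qed
        show "t \<le> p m" if "j < m" "m + 2 \<le> N"
        proof (rule ccontr)
          assume "\<not> t \<le> p m"
          then have "P m" using that by (simp add: P_def)
          then show False using maxj that by fastforce
        qed
      qed
    qed
    have jN: "j < N - 1" using jprops N2 unfolding N_def by arith
    have "ctd_seg d (s ! j) (s ! (j + 1)) t = y j + (t - p j) *\<^sub>R C.sl j"
      unfolding ctd_seg_def C.sl_def p_def[symmetric] ylab
      using C.dp_pos[OF jN] by (simp add: p_def divide_inverse)
    also have "\<dots> = C.F t" using C.F_on jprops by metis
    finally show "ctd_interp d t = C.F t" using ci by simp
  qed
  note ctdF = this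
  have Yix: "Y $ ix m = y m" for m by (simp add: y_def)
  have DxDt: "C.Dx m = Dt d (ix (m - 1)) (ix m) (ix (Suc m))" if "1 \<le> m" "m + 2 \<le> N" for m
  proof -
    have "Suc (m - 1) = m" using that by simp
    moreover have "m - 1 < N" "m < N" "Suc m < N" using that by auto
    ultimately show ?thesis using that
      by (simp add: C.Dx_def C.sl_def Dt_def d ix Yix)
  qed
  have gen1: "Dt d j1 j2 j3 $ t1 \<noteq> 0" if "distinct [j1, j2, j3]" for j1 j2 j3
    using gen that unfolding generic_def by blast
  have gen2: "Dt d j1 j2 j3 $ t1 * Dt d j2 j3 j4 $ t2 \<noteq> Dt d j1 j2 j3 $ t2 * Dt d j2 j3 j4 $ t1"
    if "distinct [j1, j2, j3, j4]" for j1 j2 j3 j4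
    using gen that unfolding generic_def by blast
  have genC: "C.qv m \<noteq> C.qv (Suc m)" if m: "1 \<le> m" "m + 3 \<le> N" for m
  proof
    assume eq: "C.qv m = C.qv (Suc m)"
    have dis: "distinct [ix (m - 1), ix m, ix (Suc m), ix (Suc (Suc m))]"
      using m ix_inj by (auto dest: ix_inj)
    have Da: "C.Dx m = Dt d (ix (m - 1)) (ix m) (ix (Suc m))" using DxDt m by simp
    have Db: "C.Dx (Suc m) = Dt d (ix m) (ix (Suc m)) (ix (Suc (Suc m)))" using DxDt[of "Suc m"] m by simp
    have a0: "C.Dx m $ t1 \<noteq> 0" using Da gen1 dis by simp
    have b0: "C.Dx (Suc m) $ t1 \<noteq> 0" using Db gen1 dis by simp
    then have nb: "norm (C.Dx (Suc m)) \<noteq> 0" by auto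
    have na: "norm (C.Dx m) \<noteq> 0" using a0 by auto
    define c where "c = norm (C.Dx m) / norm (C.Dx (Suc m))"
    have "C.Dx m = c *\<^sub>R C.Dx (Suc m)"
    proof -
      have "C.Dx m = norm (C.Dx m) *\<^sub>R C.qv m" using na by (simp add: C.qv_def)
      also have "\<dots> = norm (C.Dx m) *\<^sub>R C.qv (Suc m)" using eq by simp
      also have "\<dots> = c *\<^sub>R C.Dx (Suc m)" using nb by (simp add: C.qv_def c_def divide_inverse)
      finally show ?thesis .
    qed
    then have "C.Dx m $ t1 * C.Dx (Suc m) $ t2 = C.Dx m $ t2 * C.Dx (Suc m) $ t1" by simp
    then show False using gen2[OF dis] Da Db by simp
  qed
  define w0 where "w0 = (\<lambda>_::nat. 1::real)"
  define b0 where "b0 = (\<lambda>k. - p k)"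
  define a0 where "a0 = C.sl 0"
  define c0 where "c0 = y 0 - p 0 *\<^sub>R C.sl 0"
  have NK': "N \<le> K" using NK by (simp add: N_def)
  have relD: "relu_net K w0 b0 C.Dx a0 c0 = C.F" unfolding w0_def b0_def a0_def c0_def by (rule C.relu_D[OF NK'])
  have feasD: "feasible K d w0 b0 C.Dx a0 c0"
    unfolding feas_iff relD by (simp add: w0_def C.F_at)
  have lower: "net_cost K C.Dx \<le> net_cost K v'" if "feasible K d w' b' v' a' c'" for w' b' v' a' c'
    using C.core_lower[of K w' b' v' a' c'] that unfolding feas_iff C.cost_D[OF NK'] by blast
  have optD: "optimal K d w0 b0 C.Dx a0 c0" unfolding optimal_def using feasD lower by blast
  show ?thesis
    unfolding ctd_unique_solution_def
  proof (intro conjI allI impI)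
    show "\<exists>w b v a c. optimal K d w b v a c \<and> relu_net K w b v a c = ctd_interp d"
      using optD relD ctdF by metis
    fix w b v a c assume opt: "optimal K d w b v a c"
    then have fe: "feasible K d w b v a c" by (simp add: optimal_def)
    have "net_cost K v \<le> net_cost K C.Dx" using opt feasD unfolding optimal_def by blast
    then have "net_cost K v \<le> (\<Sum>m<N. norm (C.Dx m))" using C.cost_D[OF NK'] by simp
    then have "relu_net K w b v a c = C.F"
      using C.core_unique[OF genC] fe unfolding feas_iff by blast
    then show "relu_net K w b v a c = ctd_interp d" using ctdF by simp
  qed
qed



theorem corollary1:
  fixes P :: "((real^'n) \<times> (real^'t^'n)) measure" and K :: nat
  assumes "CARD('t) > 1" and "CARD('n) > 1" and "K \<ge> CARD('n)^2"
    and "prob_space P" and "sets P = sets lborel"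
    and "absolutely_continuous lborel P"
  shows "AE d in P. ctd_unique_solution K d"
proof -
  obtain t1 :: 't where True by simp
  have "\<exists>t2::'t. t1 \<noteq> t2"
  proof (rule ccontr)
    assume "\<not> (\<exists>t2::'t. t1 \<noteq> t2)"
    then have u: "(UNIV :: 't set) = {t1}" by auto
    have "CARD('t) = 1" unfolding u by simp
    then show False using assms(1) by simp
  qed
  then obtain t2 :: 't where t12: "t1 \<noteq> t2" by blast
  have N2: "2 \<le> CARD('n)" using assms(2) by simp
  have "CARD('n) \<le> CARD('n)^2" by (simp add: power2_eq_square)
  then have NK: "CARD('n) \<le> K" using assms(3) by linarith
  have "{d::(real^'n) \<times> (real^'t^'n). \<not> ctd_unique_solution K d} \<subseteq> {d. \<not> generic t1 t2 d}"
    using generic_unique[OF t12 N2 NK] by blast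
  then have "negligible {d::(real^'n) \<times> (real^'t^'n). \<not> ctd_unique_solution K d}"
    using negl_bad[OF t12] by (rule negligible_subset[rotated])
  then show ?thesis by (rule AE_from_negligible[OF assms(6)])
qed

end
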